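(* In the setting of the construction below, let $D\in\mathfrak M$, $D\subseteq\mathbb P$, be pre-dense in $\mathbb P$, and let $U\in\mathbb U$. Then $U\subseteq\bigcup D'$ for some finite $D'\subseteq D$. Moreover, $D$ is pre-dense in $\mathbb U\cup\mathbb P$.
   Context: Notation. $2^{<\omega}$ is the set of finite binary strings, $\Lambda$ the empty string, $\mathrm{lh}(s)$ the length of $s$, $2^n$ the set of strings of length $n$, $s\subseteq t$ means $t$ extends $s$, $s^\frown t$ concatenation. For strings $s,t$ with $\mathrm{lh}(s)\le\mathrm{lh}(t)$, $s\cdot t$ is the string of length $\mathrm{lh}(t)$ with $(s\cdot t)(k)=t(k)+s(k)\bmod 2$ for $k<\mathrm{lh}(s)$ and $(s\cdot t)(k)=t(k)$ otherwise; if $\mathrm{lh}(s)>\mathrm{lh}(t)$ then $s\cdot t=(s\restriction\mathrm{lh}(t))\cdot t$. For $T\subseteq 2^{<\omega}$, $s\cdot T=\{s\cdot t:t\in T\}$. For a tree $T$ and $s\in T$, $T\upharpoonright s=\{t\in T:s\subseteq t\lor t\subseteq s\}$. A perfect tree is a nonempty tree $T\subseteq 2^{<\omega}$ with no endpoints and no isolated branches; its stem $\mathrm{stem}(T)$ is the largest $s\in T$ with $T=T\upharpoonright s$. A perfect tree $T$ is large, written $T\in\mathbf{LT}$, if there are nonempty strings $q^i_n$ ($n<\omega$, $i=0,1$) with $\mathrm{lh}(q^0_n)=\mathrm{lh}(q^1_n)\ge1$ and $q^i_n(0)=i$, such that $T$ consists exactly of all initial segments of strings $r^\frown q^{i(0)}_0{}^\frown\cdots{}^\frown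 q^{i(n)}_n$, where $r=\mathrm{stem}(T)$, $n<\omega$, $i(0),\dots,i(n)\in\{0,1\}$. Its splitting levels are $\mathrm{spl}_0(T)=\mathrm{lh}(r)$, $\mathrm{spl}_{n+1}(T)=\mathrm{spl}_n(T)+\mathrm{lh}(q^0_n)$. For $T\in\mathbf{LT}$ and $i\in\{0,1\}$, $T(\to i)=T\upharpoonright(\mathrm{stem}(T)^\frown i)$; for $s\in 2^n$ with $n\ge1$, $T(\to s)=(\cdots((T(\to s(0)))(\to s(1)))\cdots)(\to s(n-1))$, and $T(\to\Lambda)=T$. For $S,T\in\mathbf{LT}$, $S\subseteq_n T$ means $S\subseteq T$ and $\mathrm{spl}_k(S)=\mathrm{spl}_k(T)$ for all $k<n$. A large-tree forcing notion (LTF) is a set $\mathbb P\subseteq\mathbf{LT}$ such that $T\upharpoonright u\in\mathbb P$ whenever $u\in T\in\mathbb P$, and $s\cdot T\in\mathbb P$ whenever $T\in\mathbb P$ and $s\in 2^{<\omega}$; ordered by inclusion (smaller is stronger). $\mathbf{LC}_n(\mathbb P)$ is the set of $T\in\mathbf{LT}$ with $T(\to s)\in\mathbb P$ for all $s\in 2^n$. Multitrees. A multitree is a sequence $\varphi=\langle\langle\tau^\varphi_k,p^\varphi_k\rangle:k<\omega\rangle$ with $p^\varphi_k\in\omega\cup\{-1\}$, such that the support $|\varphi|=\{k:p^\varphi_k\ne-1\}$ is finite; for $k\in|\varphi|$, $\tau^\varphi_k=\langle T^\varphi_k(0),\dots,T^\varphi_k(p^\varphi_k)\rangle$ with each $T^\varphi_k(n)\in\mathbf{LT}$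 and $T^\varphi_k(n)\subseteq_n T^\varphi_k(n-1)$ for $1\le n\le p^\varphi_k$; for $k\notin|\varphi|$, $\tau^\varphi_k$ is empty. $\psi\preccurlyeq\varphi$ means $|\psi|\subseteq|\varphi|$ and for $k\in|\psi|$: $p^\varphi_k\ge p^\psi_k$ and $T^\varphi_k(n)=T^\psi_k(n)$ for all $n\le p^\psi_k$. $\mathbf{MT}(\mathbb P)$ is the set of multitrees $\varphi$ with $T^\varphi_k(n)\in\mathbf{LC}_n(\mathbb P)$ for all $k\in|\varphi|$, $n\le p^\varphi_k$. Construction. $\mathrm{ZFC}'$ is ZFC without the power set axiom plus the axiom that $\mathcal P(\omega)$ exists. Let $\mathfrak M$ be a countable transitive model of $\mathrm{ZFC}'$ and $\mathbb P\in\mathfrak M$ an LTF. Let $\Phi=\langle\varphi(j):j<\omega\rangle$ be a $\preccurlyeq$-increasing sequence in $\mathbf{MT}(\mathbb P)$ meeting every set $D\in\mathfrak M$, $D\subseteq\mathbf{MT}(\mathbb P)$, which is dense (every $\psi\in\mathbf{MT}(\mathbb P)$ has some $\varphi\in D$ with $\psi\preccurlyeq\varphi$). Then for each $k$ there are trees $T^\Phi_k(n)\in\mathbf{LC}_n(\mathbb P)$, $n<\omega$, with $T^\Phi_k(n+1)\subseteq_{n+1}T^\Phi_k(n)$, such that $T^{\varphi(j)}_k(n)=T^\Phi_k(n)$ whenever $k\in|\varphi(j)|$ and $n\le p^{\varphi(j)}_k$. Put $U^\Phi_k=\bigcap_n T^\Phi_k(n)\in\mathbf{LT}$, $U^\Phi_k(s)=U^\Phi_k(\to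 s)$ for $s\in 2^{<\omega}$, and $\mathbb U=\{\sigma\cdot U^\Phi_k(s):k<\omega,\ s,\sigma\in 2^{<\omega}\}$. *)

theory Defs
  imports Main "HOL-Library.Sublist"
begin

text \<open>Finite binary strings are bool lists (False = 0, True = 1); trees are sets of strings.\<close>

type_synonym str = "bool list"
type_synonym tree = "bool list set"

definition dot :: "str \<Rightarrow> str \<Rightarrow> str" where
  "dot s t = map (\<lambda>k. if k < length s then (s ! k \<noteq> t ! k) else t ! k) [0..<length t]"

definition shiftT :: "str \<Rightarrow> tree \<Rightarrow> tree" where
  "shiftT s T = dot s ` T"

definition restr :: "tree \<Rightarrow> str \<Rightarrow> tree" where
  "restr T u = {t \<in> T. prefix u t \<or> prefix t u}"

text \<open>Large trees: witnessed by stem r and strings q n i.\<close>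
definition LT_wit :: "tree \<Rightarrow> str \<Rightarrow> (nat \<Rightarrow> bool \<Rightarrow> str) \<Rightarrow> bool" where
  "LT_wit T r q \<longleftrightarrow>
     (\<forall>n. length (q n False) = length (q n True) \<and> length (q n False) \<ge> 1
          \<and> q n False ! 0 = False \<and> q n True ! 0 = True) \<and>
     T = {t. \<exists>n is. length is = Suc n \<and>
                 prefix t (r @ concat (map (\<lambda>m. q m (is ! m)) [0..<Suc n]))}"

definition LT :: "tree \<Rightarrow> bool" where
  "LT T \<longleftrightarrow> (\<exists>r q. LT_wit T r q)"

definition stem :: "tree \<Rightarrow> str" where
  "stem T = (THE s. s \<in> T \<and> T = restr T s \<and> (\<forall>u. u \<in> T \<and> T = restr T u \<longrightarrow> prefix u s))"

definition spl :: "tree \<Rightarrow> nat \<Rightarrow> nat" where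
  "spl T n = (SOME v. \<exists>r q. LT_wit T r q \<and> v = length r + (\<Sum>m<n. length (q m False)))"

definition goto1 :: "tree \<Rightarrow> bool \<Rightarrow> tree" where
  "goto1 T i = restr T (stem T @ [i])"

fun goto :: "tree \<Rightarrow> str \<Rightarrow> tree" where
  "goto T [] = T"
| "goto T (i # s) = goto (goto1 T i) s"

definition subn :: "tree \<Rightarrow> tree \<Rightarrow> nat \<Rightarrow> bool" where
  "subn S T n \<longleftrightarrow> LT S \<and> LT T \<and> S \<subseteq> T \<and> (\<forall>k<n. spl S k = spl T k)"

definition LTF :: "tree set \<Rightarrow> bool" where
  "LTF P \<longleftrightarrow> (\<forall>T\<in>P. LT T) \<and> (\<forall>T\<in>P. \<forall>u\<in>T. restr T u \<in> P)
             \<and> (\<forall>T\<in>P. \<forall>s. shiftT s T \<in> P)"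

definition LC :: "nat \<Rightarrow> tree set \<Rightarrow> tree set" where
  "LC n P = {T. LT T \<and> (\<forall>s. length s = n \<longrightarrow> goto T s \<in> P)}"

text \<open>Multitrees: component k is the list tau_k = [T_k(0),...,T_k(p_k)], so p_k = length - 1
  and p_k = -1 iff the list is empty.\<close>
type_synonym mtree = "nat \<Rightarrow> tree list"

definition supp :: "mtree \<Rightarrow> nat set" where
  "supp \<phi> = {k. \<phi> k \<noteq> []}"

definition is_multitree :: "mtree \<Rightarrow> bool" where
  "is_multitree \<phi> \<longleftrightarrow> finite (supp \<phi>) \<and>
     (\<forall>k. (\<forall>n<length (\<phi> k). LT (\<phi> k ! n)) \<and>
          (\<forall>n. 1 \<le> n \<and> n < length (\<phi> k) \<longrightarrow> subn (\<phi> k ! n) (\<phi> k ! (n - 1)) n))"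

definition mt_le :: "mtree \<Rightarrow> mtree \<Rightarrow> bool" where
  "mt_le \<psi> \<phi> \<longleftrightarrow> (\<forall>k. \<psi> k \<noteq> [] \<longrightarrow> prefix (\<psi> k) (\<phi> k))"

definition MT :: "tree set \<Rightarrow> mtree set" where
  "MT P = {\<phi>. is_multitree \<phi> \<and> (\<forall>k n. n < length (\<phi> k) \<longrightarrow> \<phi> k ! n \<in> LC n P)}"

definition dense_MT :: "tree set \<Rightarrow> mtree set \<Rightarrow> bool" where
  "dense_MT P X \<longleftrightarrow> X \<subseteq> MT P \<and> (\<forall>\<psi>\<in>MT P. \<exists>\<phi>\<in>X. mt_le \<psi> \<phi>)"

text \<open>The following set of multitrees is definable in the ground model from D, P and k;
  it is used to express that such sets belong to the model.\<close>
definition cover_set :: "tree set \<Rightarrow> tree set \<Rightarrow> nat \<Rightarrow> mtree set" where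
  "cover_set P D k = {\<phi> \<in> MT P. k \<in> supp \<phi> \<and>
      (\<forall>s. length s = length (\<phi> k) - 1 \<longrightarrow> (\<exists>S\<in>D. goto (last (\<phi> k)) s \<subseteq> S))}"

definition predense :: "tree set \<Rightarrow> tree set \<Rightarrow> bool" where
  "predense D Q \<longleftrightarrow> (\<forall>T\<in>Q. \<exists>S\<in>D. \<exists>R\<in>Q. R \<subseteq> T \<and> R \<subseteq> S)"

definition Uk :: "(nat \<Rightarrow> nat \<Rightarrow> tree) \<Rightarrow> nat \<Rightarrow> tree" where
  "Uk TP k = (\<Inter>n. TP k n)"

definition UU :: "(nat \<Rightarrow> nat \<Rightarrow> tree) \<Rightarrow> tree set" where
  "UU TP = {shiftT \<sigma> (goto (Uk TP k) s) | k s \<sigma>. True}"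

end

theory Submission
  imports Defs
begin

definition bw :: "(nat \<Rightarrow> bool \<Rightarrow> str) \<Rightarrow> (nat \<Rightarrow> bool) \<Rightarrow> nat \<Rightarrow> str" where
  "bw q f N = concat (map (\<lambda>m. q m (f m)) [0..<N])"

definition trw :: "str \<Rightarrow> (nat \<Rightarrow> bool \<Rightarrow> str) \<Rightarrow> tree" where
  "trw r q = {y. \<exists>f N. prefix y (r @ bw q f N)}"

definition wfq :: "(nat \<Rightarrow> bool \<Rightarrow> str) \<Rightarrow> bool" where
  "wfq q \<longleftrightarrow> (\<forall>n. length (q n False) = length (q n True) \<and> length (q n False) \<ge> 1
          \<and> q n False ! 0 = False \<and> q n True ! 0 = True)"

lemma wfq_D: "wfq q \<Longrightarrow> length (q n False) = length (q n True) \<and> 1 \<le> length (q n False)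
     \<and> q n False ! 0 = False \<and> q n True ! 0 = True"
  unfolding wfq_def by blast

lemma wfq_len: "wfq q \<Longrightarrow> length (q n i) = length (q n False)"
  using wfq_D[of q n] by (cases i) auto

lemma wfq_pos: "wfq q \<Longrightarrow> length (q n i) \<ge> 1"
  using wfq_D[of q n] by (cases i) auto

lemma wfq_hd: "wfq q \<Longrightarrow> q n i ! 0 = i"
  using wfq_D[of q n] by (cases i) auto

lemma wfq_shift: "wfq q \<Longrightarrow> wfq (\<lambda>m. q (m + k))"
  unfolding wfq_def by blast

lemma wfq_Suc: "wfq q \<Longrightarrow> wfq (\<lambda>m. q (Suc m))"
  unfolding wfq_def by blast

lemma bw_0[simp]: "bw q f 0 = []" by (simp add: bw_def)

lemma bw_Suc_last: "bw q f (Suc N) = bw q f N @ q N (f N)"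
  by (simp add: bw_def)

lemma bw_Suc_first: "bw q f (Suc N) = q 0 (f 0) @ bw (\<lambda>m. q (Suc m)) (\<lambda>m. f (Suc m)) N"
  by (induction N) (simp_all add: bw_Suc_last)

lemma bw_add: "bw q f (a + b) = bw q f a @ bw (\<lambda>m. q (m + a)) (\<lambda>m. f (m + a)) b"
proof (induction b)
  case (Suc b)
  have "bw q f (a + Suc b) = bw q f (a + b) @ q (a + b) (f (a + b))"
    using bw_Suc_last[of q f "a + b"] by simp
  also have "\<dots> = bw q f a @ bw (\<lambda>m. q (m + a)) (\<lambda>m. f (m + a)) (Suc b)"
    using Suc by (simp add: bw_Suc_last add.commute[of b a])
  finally show ?case .
qed simp

lemma bw_mono: "a \<le> b \<Longrightarrow> prefix (bw q f a) (bw q f b)"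
  using bw_add[of q f a "b - a"] by simp

lemma bw_cong: "(\<And>m. m < N \<Longrightarrow> q m (f m) = q' m (g m)) \<Longrightarrow> bw q f N = bw q' g N"
  unfolding bw_def by (rule arg_cong[where f=concat]) auto

lemma bw_length: "wfq q \<Longrightarrow> length (bw q f N) = (\<Sum>m<N. length (q m False))"
proof (induction N)
  case (Suc N) thus ?case using wfq_len[of q N "f N"] by (simp add: bw_Suc_last)
qed simp

lemma bw_length_ge: "wfq q \<Longrightarrow> length (bw q f N) \<ge> N"
proof (induction N)
  case (Suc N) thus ?case using wfq_pos[of q N "f N"] by (simp add: bw_Suc_last)
qed simp

lemma LT_wit_iff: "LT_wit T r q \<longleftrightarrow> wfq q \<and> T = trw r q"
proof -
  have "{t. \<exists>n is. length is = Suc n \<and>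
                 prefix t (r @ concat (map (\<lambda>m. q m (is ! m)) [0..<Suc n]))} = trw r q"
  proof (intro set_eqI iffI)
    fix t assume "t \<in> {t. \<exists>n is. length is = Suc n \<and>
                 prefix t (r @ concat (map (\<lambda>m. q m (is ! m)) [0..<Suc n]))}"
    then obtain n "is" where "prefix t (r @ bw q (\<lambda>m. is ! m) (Suc n))"
      by (auto simp: bw_def)
    thus "t \<in> trw r q" unfolding trw_def by blast
  next
    fix t assume "t \<in> trw r q"
    then obtain f N where p: "prefix t (r @ bw q f N)" unfolding trw_def by blast
    have "prefix (bw q f N) (bw q f (Suc N))" by (rule bw_mono) simp
    with p have "prefix t (r @ bw q f (Suc N))"
      by (meson prefix_order.trans same_prefix_prefix)
    moreover have "bw q f (Suc N) = concat (map (\<lambda>m. q m (map f [0..<Suc N] ! m)) [0..<Suc N])"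
      unfolding bw_def by (rule arg_cong[where f=concat]) (auto simp del: upt_Suc)
    ultimately show "t \<in> {t. \<exists>n is. length is = Suc n \<and>
                 prefix t (r @ concat (map (\<lambda>m. q m (is ! m)) [0..<Suc n]))}"
      by (intro CollectI exI[of _ N] exI[of _ "map f [0..<Suc N]"]) simp
  qed
  thus ?thesis unfolding LT_wit_def wfq_def by auto
qed

lemma LT_iff: "LT T \<longleftrightarrow> (\<exists>r q. wfq q \<and> T = trw r q)"
  unfolding LT_def LT_wit_iff by blast


lemma pfx_nth: "prefix a b \<Longrightarrow> k < length a \<Longrightarrow> a ! k = b ! k"
  by (auto simp: prefix_def nth_append)

lemma pfx_eq_len: "prefix a b \<Longrightarrow> length a = length b \<Longrightarrow> a = b"
  by (auto simp: prefix_def)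

lemma pfx_less: "prefix a b \<Longrightarrow> a \<noteq> b \<Longrightarrow> length a < length b"
  by (auto simp: prefix_def)

lemma pfx_cases: "prefix y z \<Longrightarrow> prefix x z \<Longrightarrow> prefix y x \<or> prefix x y"
  using prefix_same_cases by blast

lemma wfq_cons: "wfq q \<Longrightarrow> q n i = i # drop 1 (q n i)"
proof -
  assume w: "wfq q"
  have "q n i \<noteq> []" using wfq_pos[OF w, of n i] by auto
  thus ?thesis using wfq_hd[OF w, of n i] by (cases "q n i") auto
qed

lemma trw_prefix_root: "prefix y r \<Longrightarrow> y \<in> trw r q"
  unfolding trw_def by (rule CollectI, rule exI[of _ undefined], rule exI[of _ 0]) simp

lemma trw_comp: "y \<in> trw r q \<Longrightarrow> prefix y r \<or> prefix r y"
  unfolding trw_def using pfx_cases[of y _ r] by (auto intro: prefix_order.trans)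

lemma trw_closed: "y \<in> trw r q \<Longrightarrow> prefix x y \<Longrightarrow> x \<in> trw r q"
  unfolding trw_def by (auto intro: prefix_order.trans)

lemma restr_sub: "restr T u \<subseteq> T" unfolding restr_def by auto

lemma restr_mono: "S \<subseteq> T \<Longrightarrow> restr S u \<subseteq> restr T u" unfolding restr_def by auto

lemma restr_restr: "prefix a b \<Longrightarrow> restr (restr T a) b = restr T b"
  unfolding restr_def using pfx_cases by (auto intro: prefix_order.trans)

lemma restr_trw_root: "restr (trw r q) r = trw r q"
  unfolding restr_def using trw_comp by blast

lemma bw_child: "r @ q 0 i @ bw (\<lambda>m. q (Suc m)) f N
   = r @ bw q (\<lambda>m. if m = 0 then i else f (m - 1)) (Suc N)"
  by (simp add: bw_Suc_first)

lemma restr_trw: assumes w: "wfq q"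
  shows "restr (trw r q) (r @ [i]) = trw (r @ q 0 i) (\<lambda>m. q (Suc m))"
proof (intro set_eqI iffI)
  fix x assume "x \<in> trw (r @ q 0 i) (\<lambda>m. q (Suc m))"
  then obtain f N where p: "prefix x (r @ q 0 i @ bw (\<lambda>m. q (Suc m)) f N)"
    unfolding trw_def by (simp only: mem_Collect_eq append_assoc) blast
  hence "prefix x (r @ bw q (\<lambda>m. if m = 0 then i else f (m - 1)) (Suc N))"
    by (simp only: bw_child)
  hence xT: "x \<in> trw r q" unfolding trw_def by (intro CollectI exI)
  obtain d where d: "q 0 i = i # d" using wfq_cons[OF w, of 0 i] by blast
  have "prefix (r @ [i]) (r @ q 0 i @ bw (\<lambda>m. q (Suc m)) f N)"
    by (simp add: d)
  hence "prefix x (r @ [i]) \<or> prefix (r @ [i]) x" using p pfx_cases by blast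
  thus "x \<in> restr (trw r q) (r @ [i])"
    unfolding restr_def using xT by blast
next
  fix x assume "x \<in> restr (trw r q) (r @ [i])"
  hence x: "x \<in> trw r q" and c: "prefix x (r @ [i]) \<or> prefix (r @ [i]) x"
    unfolding restr_def by auto
  obtain d where d: "q 0 i = i # d" using wfq_cons[OF w, of 0 i] by blast
  have ri: "prefix (r @ [i]) (r @ q 0 i)" by (simp add: d)
  show "x \<in> trw (r @ q 0 i) (\<lambda>m. q (Suc m))"
  proof (cases "prefix x (r @ [i])")
    case True
    hence "prefix x (r @ q 0 i)" using ri by (rule prefix_order.trans)
    thus ?thesis by (rule trw_prefix_root)
  next
    case False
    with c have ri2: "prefix (r @ [i]) x" by auto
    from x obtain f N where p: "prefix x (r @ bw q f N)" unfolding trw_def by blast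
    have "N \<noteq> 0"
    proof
      assume "N = 0"
      with p have "prefix x r" by simp
      hence "length x \<le> length r" by (rule prefix_length_le)
      moreover have "length (r @ [i]) \<le> length x" using ri2 by (rule prefix_length_le)
      ultimately show False by simp
    qed
    then obtain M where N: "N = Suc M" by (cases N) auto
    have eq: "r @ bw q f N = r @ q 0 (f 0) @ bw (\<lambda>m. q (Suc m)) (\<lambda>m. f (Suc m)) M"
      by (simp add: N bw_Suc_first)
    have "x ! length r = i" using pfx_nth[OF ri2, of "length r"] by simp
    moreover have "x ! length r = (r @ bw q f N) ! length r"
      using pfx_nth[OF p, of "length r"] prefix_length_le[OF ri2] by simp
    moreover have "(r @ bw q f N) ! length r = f 0"
      unfolding eq by (subst wfq_cons[OF w, of 0 "f 0"]) (simp add: nth_append)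
    ultimately have "f 0 = i" by simp
    with p eq have "prefix x (r @ q 0 i @ bw (\<lambda>m. q (Suc m)) (\<lambda>m. f (Suc m)) M)" by simp
    thus ?thesis unfolding trw_def by (intro CollectI exI) simp
  qed
qed

lemma trw_child_sub: "wfq q \<Longrightarrow> trw (r @ q 0 i) (\<lambda>m. q (Suc m)) \<subseteq> trw r q"
  using restr_trw[of q r i] restr_sub by metis

lemma trw_child_in: "wfq q \<Longrightarrow> prefix y (r @ q 0 i) \<Longrightarrow> y \<in> trw r q"
  using trw_child_sub[of q r i] trw_prefix_root[of y "r @ q 0 i"] by blast

lemma stem_trw: assumes w: "wfq q" shows "stem (trw r q) = r"
proof -
  let ?T = "trw r q"
  have P: "r \<in> ?T \<and> ?T = restr ?T r \<and> (\<forall>u. u \<in> ?T \<and> ?T = restr ?T u \<longrightarrow> prefix u r)"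
  proof (intro conjI allI impI)
    show "r \<in> ?T" by (rule trw_prefix_root) simp
    show "?T = restr ?T r" using restr_trw_root by simp
    fix u assume u: "u \<in> ?T \<and> ?T = restr ?T u"
    show "prefix u r"
    proof (rule ccontr)
      assume nu: "\<not> prefix u r"
      with trw_comp u have ru: "prefix r u" by blast
      with nu have lt: "length r < length u"
        by (metis le_neq_implies_less prefix_length_le prefix_length_prefix prefix_order.order_refl)
      let ?i = "u ! length r"
      let ?z = "r @ q 0 (\<not> ?i)"
      have "?z \<in> ?T" using restr_trw[OF w, of r "\<not> ?i"] trw_prefix_root[of ?z ?z]
        restr_sub by blast
      with u have "?z \<in> restr ?T u" by simp
      hence cz: "prefix ?z u \<or> prefix u ?z" unfolding restr_def by auto
      have zr: "?z ! length r = (\<not> ?i)"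
        using wfq_pos[OF w, of 0 "\<not> ?i"] wfq_hd[OF w, of 0 "\<not> ?i"] by (simp add: nth_append)
      have lz: "length r < length ?z" using wfq_pos[OF w, of 0 "\<not> ?i"] by fastforce
      from cz show False
      proof
        assume "prefix ?z u" thus False using pfx_nth[of ?z u "length r"] zr lz by simp
      next
        assume "prefix u ?z" thus False using pfx_nth[of u ?z "length r"] zr lt by simp
      qed
    qed
  qed
  show ?thesis unfolding stem_def
  proof (rule the_equality)
    show "r \<in> ?T \<and> ?T = restr ?T r \<and> (\<forall>u. u \<in> ?T \<and> ?T = restr ?T u \<longrightarrow> prefix u r)" by (rule P)
    fix s assume s: "s \<in> ?T \<and> ?T = restr ?T s \<and> (\<forall>u. u \<in> ?T \<and> ?T = restr ?T u \<longrightarrow> prefix u s)"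
    hence "prefix r s" using P by blast
    moreover have "prefix s r" using P s by blast
    ultimately show "s = r" by (rule prefix_order.antisym[rotated])
  qed
qed

lemma goto1_trw: "wfq q \<Longrightarrow> goto1 (trw r q) i = trw (r @ q 0 i) (\<lambda>m. q (Suc m))"
  unfolding goto1_def by (simp add: stem_trw restr_trw)

lemma goto_trw: "wfq q \<Longrightarrow>
  goto (trw r q) s = trw (r @ bw q (nth s) (length s)) (\<lambda>m. q (m + length s))"
proof (induction s arbitrary: r q)
  case Nil thus ?case by simp
next
  case (Cons i s)
  have "goto (trw r q) (i # s) = goto (trw (r @ q 0 i) (\<lambda>m. q (Suc m))) s"
    by (simp add: goto1_trw Cons.prems)
  also have "\<dots> = trw (r @ q 0 i @ bw (\<lambda>m. q (Suc m)) (nth s) (length s)) (\<lambda>m. q (Suc (m + length s)))"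
    using Cons.IH[of "\<lambda>m. q (Suc m)" "r @ q 0 i"] wfq_Suc[OF Cons.prems] by simp
  also have "r @ q 0 i @ bw (\<lambda>m. q (Suc m)) (nth s) (length s) = r @ bw q (nth (i # s)) (length (i # s))"
    by (simp add: bw_Suc_first)
  finally show ?case by simp
qed

lemma goto_restr: "wfq q \<Longrightarrow> goto (trw r q) s = restr (trw r q) (r @ bw q (nth s) (length s))"
proof (induction s arbitrary: r q)
  case Nil thus ?case by (simp add: restr_trw_root)
next
  case (Cons i s)
  have w: "wfq (\<lambda>m. q (Suc m))" using wfq_Suc[OF Cons.prems] .
  have e: "r @ q 0 i @ bw (\<lambda>m. q (Suc m)) (nth s) (length s) = r @ bw q (nth (i # s)) (length (i # s))"
    by (simp add: bw_Suc_first)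
  have "goto (trw r q) (i # s) = goto (trw (r @ q 0 i) (\<lambda>m. q (Suc m))) s"
    by (simp add: goto1_trw Cons.prems)
  also have "\<dots> = restr (restr (trw r q) (r @ [i])) (r @ bw q (nth (i # s)) (length (i # s)))"
    using Cons.IH[OF w, of "r @ q 0 i"] restr_trw[OF Cons.prems, of r i] e by simp
  also have "\<dots> = restr (trw r q) (r @ bw q (nth (i # s)) (length (i # s)))"
    by (rule restr_restr) (simp add: bw_Suc_first wfq_cons[OF Cons.prems, of 0 i, symmetric] 
         | subst wfq_cons[OF Cons.prems, of 0 i], simp)+
  finally show ?case .
qed

lemma goto_sub: "goto T s \<subseteq> T"
proof (induction s arbitrary: T)
  case (Cons i s) thus ?case using restr_sub[of T] by (simp add: goto1_def) blast
qed simp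

lemma goto_append: "goto T (a @ b) = goto (goto T a) b"
  by (induction a arbitrary: T) simp_all

lemma trw_unique: "wfq q \<Longrightarrow> wfq q' \<Longrightarrow> trw r q = trw r' q' \<Longrightarrow> r = r' \<and> q m i = q' m i"
proof (induction m arbitrary: r q r' q')
  case 0
  have "r = r'" using stem_trw[OF 0(1), of r] stem_trw[OF 0(2), of r'] 0(3) by simp
  moreover have "goto1 (trw r q) i = goto1 (trw r' q') i" using 0(3) by simp
  hence "trw (r @ q 0 i) (\<lambda>m. q (Suc m)) = trw (r' @ q' 0 i) (\<lambda>m. q' (Suc m))"
    by (simp add: goto1_trw 0(1,2))
  hence "r @ q 0 i = r' @ q' 0 i"
    using stem_trw[OF wfq_Suc[OF 0(1)]] stem_trw[OF wfq_Suc[OF 0(2)]] by metis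
  ultimately show ?case by simp
next
  case (Suc m)
  have "r = r'" using stem_trw[OF Suc(2), of r] stem_trw[OF Suc(3), of r'] Suc(4) by simp
  moreover have "goto1 (trw r q) i = goto1 (trw r' q') i" using Suc(4) by simp
  hence "trw (r @ q 0 i) (\<lambda>m. q (Suc m)) = trw (r' @ q' 0 i) (\<lambda>m. q' (Suc m))"
    by (simp add: goto1_trw Suc(2,3))
  hence "(\<lambda>m. q (Suc m)) m i = (\<lambda>m. q' (Suc m)) m i"
    using Suc.IH[OF wfq_Suc[OF Suc(2)] wfq_Suc[OF Suc(3)]] by blast
  ultimately show ?case by simp
qed

lemma spl_trw: assumes w: "wfq q"
  shows "spl (trw r q) n = length r + (\<Sum>m<n. length (q m False))"
proof -
  let ?P = "\<lambda>v. \<exists>r' q'. LT_wit (trw r q) r' q' \<and> v = length r' + (\<Sum>m<n. length (q' m False))"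
  have "?P (length r + (\<Sum>m<n. length (q m False)))" using w by (auto simp: LT_wit_iff)
  hence "?P (spl (trw r q) n)" unfolding spl_def by (rule someI)
  then obtain r' q' where "wfq q'" "trw r q = trw r' q'"
    "spl (trw r q) n = length r' + (\<Sum>m<n. length (q' m False))" by (auto simp: LT_wit_iff)
  with trw_unique[OF w, of q' r r'] show ?thesis by simp
qed


lemma trw_decomp: assumes w: "wfq q"
  shows "trw r q = (\<Union>s\<in>{s. length s = n}. goto (trw r q) s)"
proof (intro equalityI subsetI)
  fix y assume "y \<in> trw r q"
  then obtain f N where p: "prefix y (r @ bw q f N)" unfolding trw_def by blast
  let ?N = "max N n"
  have "prefix y (r @ bw q f ?N)" using p bw_mono[of N ?N q f]
    by (meson max.cobounded1 prefix_order.trans same_prefix_prefix)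
  moreover have "bw q f ?N = bw q f n @ bw (\<lambda>m. q (m + n)) (\<lambda>m. f (m + n)) (?N - n)"
    using bw_add[of q f n "?N - n"] by simp
  moreover have "bw q f n = bw q (nth (map f [0..<n])) n"
    by (rule bw_cong) simp
  ultimately have "prefix y ((r @ bw q (nth (map f [0..<n])) (length (map f [0..<n])))
        @ bw (\<lambda>m. q (m + length (map f [0..<n]))) (\<lambda>m. f (m + n)) (?N - n))" by simp
  hence "y \<in> trw (r @ bw q (nth (map f [0..<n])) (length (map f [0..<n])))
      (\<lambda>m. q (m + length (map f [0..<n])))"
    unfolding trw_def by (intro CollectI exI)
  hence "y \<in> goto (trw r q) (map f [0..<n])" by (simp only: goto_trw[OF w])
  thus "y \<in> (\<Union>s\<in>{s. length s = n}. goto (trw r q) s)" by force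
qed (use goto_sub in blast)

lemma trw_sub_prefix: assumes w: "wfq q'" and sub: "trw r' q' \<subseteq> trw r q"
  shows "prefix r r'"
proof (rule ccontr)
  assume nr: "\<not> prefix r r'"
  have r'T: "r' \<in> trw r q" using sub trw_prefix_root[of r' r' q'] by blast
  with nr trw_comp have pr: "prefix r' r" by blast
  with nr have lt: "length r' < length r"
    using pfx_less by blast
  have "\<And>b. r ! length r' = b"
  proof -
    fix b
    obtain d where d: "q' 0 b = b # d" using wfq_cons[OF w, of 0 b] by blast
    have "r' @ [b] \<in> trw r' q'" by (rule trw_child_in[OF w, of _ _ b]) (simp add: d)
    hence "r' @ [b] \<in> trw r q" using sub by blast
    hence c: "prefix (r' @ [b]) r \<or> prefix r (r' @ [b])" using trw_comp by blast
    have "prefix (r' @ [b]) r"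
    proof (cases "prefix (r' @ [b]) r")
      case False
      with c have "prefix r (r' @ [b])" by blast
      moreover have "length (r' @ [b]) \<le> length r" using lt by simp
      ultimately have "r = r' @ [b]"
        by (metis prefix_length_le prefix_order.antisym_conv le_antisym prefix_length_prefix prefix_order.order_refl)
      thus ?thesis by simp
    qed
    thus "r ! length r' = b" using pfx_nth[of "r' @ [b]" r "length r'"] by simp
  qed
  from this[of True] this[of False] show False by simp
qed

lemma dot_length[simp]: "length (dot s t) = length t"
  by (simp add: dot_def)

lemma dot_nth: "k < length t \<Longrightarrow> dot s t ! k = (if k < length s then s ! k \<noteq> t ! k else t ! k)"
  by (simp add: dot_def)

lemma dot_dot[simp]: "dot s (dot s t) = t"
  by (rule nth_equalityI) (auto simp: dot_nth)

lemma dot_take: "dot s (take n t) = take n (dot s t)"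
  by (rule nth_equalityI) (auto simp: dot_nth)

lemma dot_prefix: "prefix y z \<Longrightarrow> prefix (dot s y) (dot s z)"
proof -
  assume "prefix y z"
  hence "y = take (length y) z" by (metis append_eq_conv_conj prefix_def)
  hence "dot s y = take (length y) (dot s z)" using dot_take by metis
  thus ?thesis by (metis take_is_prefix)
qed

lemma dot_ab: "length a = length b \<Longrightarrow> dot (dot a b) (b @ x) = a @ x"
  by (rule nth_equalityI) (auto simp: dot_nth nth_append)

lemma dot_ba: "length a = length b \<Longrightarrow> dot (dot a b) (a @ x) = b @ x"
  by (rule nth_equalityI) (auto simp: dot_nth nth_append)

lemma shiftT_shiftT[simp]: "shiftT s (shiftT s T) = T"
  unfolding shiftT_def image_image by simp

lemma shiftT_mono: "S \<subseteq> T \<Longrightarrow> shiftT s S \<subseteq> shiftT s T"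
  unfolding shiftT_def by blast

lemma shiftT_Union: "shiftT s (\<Union>A) = \<Union>(shiftT s ` A)"
  unfolding shiftT_def by blast

lemma tr_shift: assumes l: "length a = length b"
  shows "shiftT (dot a b) (trw (b @ x) q) = trw (a @ x) q"
proof (intro equalityI subsetI)
  fix y assume "y \<in> shiftT (dot a b) (trw (b @ x) q)"
  then obtain z f N where y: "y = dot (dot a b) z" and p: "prefix z (b @ x @ bw q f N)"
    unfolding shiftT_def trw_def by auto
  have "prefix y (dot (dot a b) (b @ x @ bw q f N))" using dot_prefix[OF p] y by simp
  also have "dot (dot a b) (b @ x @ bw q f N) = a @ x @ bw q f N" using dot_ab[OF l] by simp
  finally show "y \<in> trw (a @ x) q" unfolding trw_def by auto
next
  fix y assume "y \<in> trw (a @ x) q"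
  then obtain f N where p: "prefix y (a @ x @ bw q f N)" unfolding trw_def by auto
  have "prefix (dot (dot a b) y) (dot (dot a b) (a @ x @ bw q f N))" using dot_prefix[OF p] .
  also have "dot (dot a b) (a @ x @ bw q f N) = b @ x @ bw q f N" using dot_ba[OF l] by simp
  finally have "dot (dot a b) y \<in> trw (b @ x) q" unfolding trw_def by auto
  moreover have "y = dot (dot a b) (dot (dot a b) y)" by simp
  ultimately show "y \<in> shiftT (dot a b) (trw (b @ x) q)" unfolding shiftT_def by blast
qed

lemma subn_struct: "wfq q \<Longrightarrow> wfq q' \<Longrightarrow> trw r' q' \<subseteq> trw r q \<Longrightarrow> length r' = length r \<Longrightarrow>
   (\<forall>m<N. length (q' m False) = length (q m False)) \<Longrightarrow> r' = r \<and> (\<forall>m<N. \<forall>i. q' m i = q m i)"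
proof (induction N arbitrary: r r' q q')
  case 0
  have "prefix r r'" using trw_sub_prefix[OF 0(2,3)] .
  hence "r' = r" using 0(4) using pfx_eq_len by metis
  thus ?case by simp
next
  case (Suc N)
  have "prefix r r'" using trw_sub_prefix[OF Suc(3,4)] .
  hence rr: "r' = r" using Suc(5) using pfx_eq_len by metis
  have "\<And>i. q' 0 i = q 0 i \<and> (\<forall>m<N. \<forall>j. q' (Suc m) j = q (Suc m) j)"
  proof -
    fix i
    have "restr (trw r q') (r @ [i]) \<subseteq> restr (trw r q) (r @ [i])"
      using Suc(4) rr by (simp add: restr_mono)
    hence sub: "trw (r @ q' 0 i) (\<lambda>m. q' (Suc m)) \<subseteq> trw (r @ q 0 i) (\<lambda>m. q (Suc m))"
      by (simp add: restr_trw Suc(2,3))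
    have "length (q' 0 i) = length (q 0 i)"
      using wfq_len[OF Suc(2), of 0 i] wfq_len[OF Suc(3), of 0 i] Suc(6) by simp
    hence l: "length (r @ q' 0 i) = length (r @ q 0 i)" by simp
    have "\<forall>m<N. length (q' (Suc m) False) = length (q (Suc m) False)" using Suc(6) by simp
    from Suc.IH[OF wfq_Suc[OF Suc(2)] wfq_Suc[OF Suc(3)] sub l this]
    show "q' 0 i = q 0 i \<and> (\<forall>m<N. \<forall>j. q' (Suc m) j = q (Suc m) j)" by simp
  qed
  hence "\<forall>m<Suc N. \<forall>i. q' m i = q m i"
    by (metis less_Suc_eq_0_disj)
  with rr show ?case by simp
qed

lemma subn_trw: assumes w: "wfq q" and w': "wfq q'" and sub: "subn (trw r' q') (trw r q) n"
  and n: "n \<ge> 1"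
  shows "r' = r \<and> (\<forall>m. Suc m < n \<longrightarrow> (\<forall>i. q' m i = q m i))"
proof -
  have sp: "\<And>k. k < n \<Longrightarrow> length r' + (\<Sum>m<k. length (q' m False)) = length r + (\<Sum>m<k. length (q m False))"
    using sub unfolding subn_def by (simp add: spl_trw w w')
  have l0: "length r' = length r" using sp[of 0] n by simp
  have "\<forall>m<n - 1. length (q' m False) = length (q m False)"
  proof (intro allI impI)
    fix m assume "m < n - 1"
    hence "m < n" "Suc m < n" by auto
    from sp[OF this(1)] sp[OF this(2)] show "length (q' m False) = length (q m False)" by simp
  qed
  from subn_struct[OF w w' _ l0 this] sub show ?thesis unfolding subn_def by auto
qed


lemma LTF_LT: "LTF P \<Longrightarrow> T \<in> P \<Longrightarrow> \<exists>r q. wfq q \<and> T = trw r q"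
  unfolding LTF_def LT_iff by blast

lemma LTF_shift: "LTF P \<Longrightarrow> T \<in> P \<Longrightarrow> shiftT s T \<in> P"
  unfolding LTF_def by blast

lemma LTF_restr: "LTF P \<Longrightarrow> T \<in> P \<Longrightarrow> u \<in> T \<Longrightarrow> restr T u \<in> P"
  unfolding LTF_def by blast

lemma bw_q2: assumes "\<And>m. m < n' \<Longrightarrow> q2 m = q1 m" "\<And>i. q2 n' i = q1 n' i @ rest"
  shows "bw q2 g (Suc n') = bw q1 g (Suc n') @ rest"
proof -
  have "bw q2 g n' = bw q1 g n'" by (rule bw_cong) (simp add: assms(1))
  thus ?thesis by (simp add: bw_Suc_last assms(2))
qed

lemma spread_step:
  assumes w1: "wfq q1" and n: "n \<ge> 1" and t: "length t = n" and LTF: "LTF P"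
    and RP: "R \<in> P" and Rsub: "R \<subseteq> goto (trw r q1) t"
  shows "\<exists>q2. wfq q2 \<and> (\<forall>m. Suc m < n \<longrightarrow> q2 m = q1 m) \<and> trw r q2 \<subseteq> trw r q1 \<and>
     (\<forall>u. length u = n \<longrightarrow> goto (trw r q2) u \<in> P \<and> goto (trw r q2) u \<subseteq> goto (trw r q1) u)
     \<and> goto (trw r q2) t = R"
proof -
  obtain rR qR where wR: "wfq qR" and R: "R = trw rR qR" using LTF_LT[OF LTF RP] by blast
  define wt where "wt = r @ bw q1 (nth t) n"
  have g1t: "goto (trw r q1) t = trw wt (\<lambda>m. q1 (m + n))"
    unfolding wt_def using goto_trw[OF w1, of r t] t by simp
  have "prefix wt rR" using trw_sub_prefix[OF wR] Rsub g1t R by simp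
  then obtain rest where rR: "rR = wt @ rest" by (auto simp: prefix_def)
  obtain n' where n': "n = Suc n'" using n by (cases n) auto
  define q2 where "q2 = (\<lambda>m. if m < n' then q1 m else if m = n' then (\<lambda>i. q1 m i @ rest) else qR (m - n))"
  have w2: "wfq q2"
    unfolding wfq_def
  proof
    fix m
    show "length (q2 m False) = length (q2 m True) \<and> 1 \<le> length (q2 m False) \<and>
          q2 m False ! 0 = False \<and> q2 m True ! 0 = True"
      using wfq_D[OF w1, of m] wfq_D[OF wR, of "m - n"] unfolding q2_def
      by (auto simp: nth_append)
  qed
  have agree: "\<And>m. Suc m < n \<Longrightarrow> q2 m = q1 m" unfolding q2_def n' by auto
  have shift2: "(\<lambda>m. q2 (m + n)) = qR" unfolding q2_def n' by auto
  have key: "\<And>u::str. length u = n \<Longrightarrow> goto (trw r q2) u = trw ((r @ bw q1 (nth u) n) @ rest) qR"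
  proof -
    fix u :: str assume u: "length u = n"
    have "bw q2 (nth u) n = bw q1 (nth u) n @ rest"
      unfolding n' by (rule bw_q2) (auto simp: q2_def)
    thus "goto (trw r q2) u = trw ((r @ bw q1 (nth u) n) @ rest) qR"
      using goto_trw[OF w2, of r u] u shift2 by simp
  qed
  have key1: "\<And>u::str. length u = n \<Longrightarrow> goto (trw r q1) u = trw ((r @ bw q1 (nth u) n) @ []) (\<lambda>m. q1 (m + n))"
    using goto_trw[OF w1] by simp
  have len: "\<And>u::str. length (r @ bw q1 (nth u) n) = length wt"
    unfolding wt_def by (simp add: bw_length[OF w1])
  have sh: "\<And>u::str. length u = n \<Longrightarrow> goto (trw r q2) u = shiftT (dot (r @ bw q1 (nth u) n) wt) R"
    using key tr_shift[OF len] R rR by simp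
  have gP: "\<And>u::str. length u = n \<Longrightarrow> goto (trw r q2) u \<in> P"
    using sh LTF_shift[OF LTF RP] by simp
  have gsub: "\<And>u::str. length u = n \<Longrightarrow> goto (trw r q2) u \<subseteq> goto (trw r q1) u"
  proof -
    fix u :: str assume u: "length u = n"
    have "goto (trw r q2) u \<subseteq> shiftT (dot (r @ bw q1 (nth u) n) wt) (trw (wt @ []) (\<lambda>m. q1 (m + n)))"
      using sh[OF u] shiftT_mono[OF Rsub] g1t by simp
    also have "\<dots> = goto (trw r q1) u" using tr_shift[OF len, of u "[]"] key1[OF u] by simp
    finally show "goto (trw r q2) u \<subseteq> goto (trw r q1) u" .
  qed
  have gt: "goto (trw r q2) t = R" using key[OF t] R rR wt_def by simp
  have "trw r q2 \<subseteq> trw r q1"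
  proof -
    have "trw r q2 = (\<Union>s\<in>{s. length s = n}. goto (trw r q2) s)" by (rule trw_decomp[OF w2])
    also have "\<dots> \<subseteq> (\<Union>s\<in>{s. length s = n}. goto (trw r q1) s)" using gsub by blast
    also have "\<dots> \<subseteq> trw r q1" using goto_sub by blast
    finally show ?thesis .
  qed
  with w2 agree gP gsub gt show ?thesis by blast
qed

lemma refine:
  assumes LTF: "LTF P" and pd: "predense E P" and w: "wfq q" and n: "n \<ge> 1"
    and G: "\<forall>u. length u = n \<longrightarrow> goto (trw r q) u \<in> P"
    and fin: "finite A"
  shows "A \<subseteq> {s. length s = n} \<Longrightarrow> \<exists>q'. wfq q' \<and> (\<forall>m. Suc m < n \<longrightarrow> q' m = q m) \<and> trw r q' \<subseteq> trw r q
    \<and> (\<forall>u. length u = n \<longrightarrow> goto (trw r q') u \<in> P) \<and> (\<forall>s\<in>A. \<exists>S\<in>E. goto (trw r q') s \<subseteq> S)"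
  using fin
proof (induction A rule: finite_induct)
  case empty
  show ?case using w G by blast
next
  case (insert t A)
  then obtain q1 where w1: "wfq q1" and a1: "\<forall>m. Suc m < n \<longrightarrow> q1 m = q m" and s1: "trw r q1 \<subseteq> trw r q"
    and G1: "\<forall>u. length u = n \<longrightarrow> goto (trw r q1) u \<in> P"
    and C1: "\<forall>s\<in>A. \<exists>S\<in>E. goto (trw r q1) s \<subseteq> S" by auto
  have t: "length t = n" using insert.prems by auto
  have "goto (trw r q1) t \<in> P" using G1 t by blast
  then obtain S R where SE: "S \<in> E" and RP: "R \<in> P" and RS: "R \<subseteq> goto (trw r q1) t" and RS2: "R \<subseteq> S"
    using pd unfolding predense_def by blast
  obtain q2 where w2: "wfq q2" and a2: "\<forall>m. Suc m < n \<longrightarrow> q2 m = q1 m" and s2: "trw r q2 \<subseteq> trw r q1"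
    and G2: "\<forall>u. length u = n \<longrightarrow> goto (trw r q2) u \<in> P \<and> goto (trw r q2) u \<subseteq> goto (trw r q1) u"
    and g2: "goto (trw r q2) t = R"
    using spread_step[OF w1 n t LTF RP RS] by blast
  have "\<forall>s\<in>insert t A. \<exists>S\<in>E. goto (trw r q2) s \<subseteq> S"
  proof
    fix s assume "s \<in> insert t A"
    show "\<exists>S\<in>E. goto (trw r q2) s \<subseteq> S"
    proof (cases "s = t")
      case True thus ?thesis using g2 RS2 SE by blast
    next
      case False
      hence sA: "s \<in> A" and sl: "length s = n" using \<open>s \<in> insert t A\<close> insert.prems by auto
      then obtain S' where "S' \<in> E" "goto (trw r q1) s \<subseteq> S'" using C1 by blast
      thus ?thesis using G2 sl by blast
    qed
  qed
  moreover have "\<forall>m. Suc m < n \<longrightarrow> q2 m = q m" using a1 a2 by simp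
  moreover have "trw r q2 \<subseteq> trw r q" using s1 s2 by blast
  ultimately show ?case using w2 G2 by blast
qed


lemma LC_LT: "T \<in> LC n P \<Longrightarrow> LT T" unfolding LC_def by simp

lemma LC_Suc: assumes LTF: "LTF P" and T: "T \<in> LC n P" shows "T \<in> LC (Suc n) P"
proof -
  obtain r q where w: "wfq q" and Tr: "T = trw r q" using T unfolding LC_def LT_iff by blast
  have "\<forall>s. length s = Suc n \<longrightarrow> goto T s \<in> P"
  proof (intro allI impI)
    fix s :: str assume s: "length s = Suc n"
    then obtain s0 i where si: "s = s0 @ [i]" and s0: "length s0 = n"
      by (metis length_Suc_conv_rev)
    have g0: "goto T s0 \<in> P" using T s0 unfolding LC_def by blast
    define w0 where "w0 = r @ bw q (nth s0) (length s0)"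
    have ge: "goto T s0 = trw w0 (\<lambda>m. q (m + length s0))"
      unfolding Tr w0_def by (rule goto_trw[OF w])
    have wq: "wfq (\<lambda>m. q (m + length s0))" by (rule wfq_shift[OF w])
    obtain d where d: "q (length s0) i = i # d" using wfq_cons[OF wq, of 0 i] by auto
    have "w0 @ [i] \<in> goto T s0" unfolding ge
      by (rule trw_child_in[OF wq, of _ _ i]) (simp add: d)
    hence "restr (goto T s0) (w0 @ [i]) \<in> P" using LTF_restr[OF LTF g0] by blast
    moreover have "goto T s = goto1 (goto T s0) i" by (simp add: si goto_append)
    moreover have "goto1 (goto T s0) i = restr (goto T s0) (w0 @ [i])"
      unfolding goto1_def ge using stem_trw[OF wq] by simp
    ultimately show "goto T s \<in> P" by simp
  qed
  thus ?thesis using T unfolding LC_def by blast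
qed

lemma predense_shift: assumes LTF: "LTF P" and pd: "predense D P"
  shows "predense (shiftT \<sigma> ` D) P"
  unfolding predense_def
proof
  fix T assume T: "T \<in> P"
  have "shiftT \<sigma> T \<in> P" using LTF_shift[OF LTF T] .
  then obtain S R where S: "S \<in> D" and R: "R \<in> P" "R \<subseteq> shiftT \<sigma> T" "R \<subseteq> S"
    using pd unfolding predense_def by blast
  have "shiftT \<sigma> R \<in> P" using LTF_shift[OF LTF R(1)] .
  moreover have "shiftT \<sigma> R \<subseteq> T" using shiftT_mono[OF R(2), of \<sigma>] by simp
  moreover have "shiftT \<sigma> R \<subseteq> shiftT \<sigma> S" using shiftT_mono[OF R(3)] .
  ultimately show "\<exists>S\<in>shiftT \<sigma> ` D. \<exists>R\<in>P. R \<subseteq> T \<and> R \<subseteq> S" using S by blast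
qed

lemma MT_extend:
  assumes psi: "\<psi> \<in> MT P" and T': "T' \<in> LC (length (\<psi> k)) P"
    and sub: "\<psi> k \<noteq> [] \<Longrightarrow> subn T' (last (\<psi> k)) (length (\<psi> k))"
  shows "\<psi>(k := \<psi> k @ [T']) \<in> MT P \<and> mt_le \<psi> (\<psi>(k := \<psi> k @ [T']))"
proof -
  let ?L = "\<psi> k"
  let ?phi = "\<psi>(k := ?L @ [T'])"
  have mt: "is_multitree \<psi>" and lc: "\<forall>k n. n < length (\<psi> k) \<longrightarrow> \<psi> k ! n \<in> LC n P"
    using psi unfolding MT_def by auto
  have LC': "\<forall>k' n. n < length (?phi k') \<longrightarrow> ?phi k' ! n \<in> LC n P"
  proof (intro allI impI)
    fix k' n assume n: "n < length (?phi k')"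
    show "?phi k' ! n \<in> LC n P"
    proof (cases "k' = k")
      case True
      show ?thesis
      proof (cases "n < length ?L")
        case True thus ?thesis using lc \<open>k' = k\<close> by (simp add: nth_append)
      next
        case False
        with n \<open>k' = k\<close> have "n = length ?L" by simp
        thus ?thesis using T' \<open>k' = k\<close> by simp
      qed
    next
      case False thus ?thesis using lc n by simp
    qed
  qed
  have fin: "finite (supp ?phi)"
  proof -
    have "supp ?phi \<subseteq> insert k (supp \<psi>)" unfolding supp_def by auto
    moreover have "finite (supp \<psi>)" using mt unfolding is_multitree_def by simp
    ultimately show ?thesis using finite_subset by blast
  qed
  have subs: "\<forall>k' n. 1 \<le> n \<and> n < length (?phi k') \<longrightarrow> subn (?phi k' ! n) (?phi k' ! (n - 1)) n"
  proof (intro allI impI)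
    fix k' n assume n: "1 \<le> n \<and> n < length (?phi k')"
    have old: "\<And>k'' n. 1 \<le> n \<Longrightarrow> n < length (\<psi> k'') \<Longrightarrow> subn (\<psi> k'' ! n) (\<psi> k'' ! (n - 1)) n"
      using mt unfolding is_multitree_def by blast
    show "subn (?phi k' ! n) (?phi k' ! (n - 1)) n"
    proof (cases "k' = k")
      case True
      show ?thesis
      proof (cases "n < length ?L")
        case True
        hence "n - 1 < length ?L" by simp
        thus ?thesis using old[of n k] n True \<open>k' = k\<close> by (simp add: nth_append)
      next
        case False
        with n \<open>k' = k\<close> have nl: "n = length ?L" by simp
        hence ne: "?L \<noteq> []" using n by auto
        have "?phi k' ! (n - 1) = last ?L" using nl ne \<open>k' = k\<close>
          by (simp add: nth_append last_conv_nth)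
        thus ?thesis using sub[OF ne] nl \<open>k' = k\<close> by simp
      qed
    next
      case False thus ?thesis using old[of n k'] n by simp
    qed
  qed
  have "is_multitree ?phi"
    unfolding is_multitree_def using fin subs LC' LC_LT by blast
  hence "?phi \<in> MT P" unfolding MT_def using LC' by blast
  moreover have "mt_le \<psi> ?phi" unfolding mt_le_def by auto
  ultimately show ?thesis by blast
qed

lemma cover_dense: assumes LTF: "LTF P" and pd: "predense E P" and Pne: "P \<noteq> {}"
  shows "dense_MT P (cover_set P E k)"
  unfolding dense_MT_def
proof (intro conjI ballI)
  show "cover_set P E k \<subseteq> MT P" unfolding cover_set_def by blast
  fix \<psi> assume psi: "\<psi> \<in> MT P"
  have lc: "\<forall>k n. n < length (\<psi> k) \<longrightarrow> \<psi> k ! n \<in> LC n P"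
    using psi unfolding MT_def by auto
  obtain T' where T': "T' \<in> LC (length (\<psi> k)) P"
    and sub: "\<psi> k \<noteq> [] \<Longrightarrow> subn T' (last (\<psi> k)) (length (\<psi> k))"
    and cov: "\<forall>s. length s = length (\<psi> k) \<longrightarrow> (\<exists>S\<in>E. goto T' s \<subseteq> S)"
  proof (cases "\<psi> k = []")
    case True
    obtain T0 where "T0 \<in> P" using Pne by blast
    then obtain S R where "S \<in> E" "R \<in> P" "R \<subseteq> S" using pd unfolding predense_def by blast
    moreover have "R \<in> LC 0 P" using \<open>R \<in> P\<close> LTF unfolding LC_def LTF_def by auto
    ultimately show ?thesis using that True by auto
  next
    case False
    define p where "p = length (\<psi> k) - 1"
    have lp: "length (\<psi> k) = Suc p" using False p_def by (cases "\<psi> k") auto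
    have lastp: "last (\<psi> k) = \<psi> k ! p" using False p_def by (simp add: last_conv_nth)
    have Tp: "\<psi> k ! p \<in> LC p P" using lc lp by simp
    obtain r q where w: "wfq q" and Tr: "\<psi> k ! p = trw r q"
      using LC_LT[OF Tp] unfolding LT_iff by blast
    have Tp1: "\<psi> k ! p \<in> LC (Suc p) P" by (rule LC_Suc[OF LTF Tp])
    have G: "\<forall>u. length u = Suc p \<longrightarrow> goto (trw r q) u \<in> P" using Tp1 Tr unfolding LC_def by simp
    obtain q' where w': "wfq q'" and ag: "\<forall>m. Suc m < Suc p \<longrightarrow> q' m = q m"
      and s': "trw r q' \<subseteq> trw r q" and G': "\<forall>u. length u = Suc p \<longrightarrow> goto (trw r q') u \<in> P"
      and C': "\<forall>s\<in>{s. length s = Suc p}. \<exists>S\<in>E. goto (trw r q') s \<subseteq> S"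
      using refine[OF LTF pd w _ G finite_lists_length_eq[of "UNIV :: bool set" "Suc p", simplified]]
      by auto
    have LTq': "LT (trw r q')" using w' unfolding LT_iff by blast
    have LTq: "LT (trw r q)" using w unfolding LT_iff by blast
    have "trw r q' \<in> LC (length (\<psi> k)) P" unfolding LC_def lp using LTq' G' by blast
    moreover have "subn (trw r q') (last (\<psi> k)) (length (\<psi> k))"
      unfolding subn_def lastp Tr lp
    proof (intro conjI allI impI LTq LTq' s')
      fix k' assume "k' < Suc p"
      have "(\<Sum>m<k'. length (q' m False)) = (\<Sum>m<k'. length (q m False))"
        by (rule sum.cong) (use ag \<open>k' < Suc p\<close> in auto)
      thus "spl (trw r q') k' = spl (trw r q) k'" by (simp add: spl_trw w w')
    qed
    moreover have "\<forall>s. length s = length (\<psi> k) \<longrightarrow> (\<exists>S\<in>E. goto (trw r q') s \<subseteq> S)"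
      using C' lp by simp
    ultimately show ?thesis using that by blast
  qed
  have ext: "\<psi>(k := \<psi> k @ [T']) \<in> MT P \<and> mt_le \<psi> (\<psi>(k := \<psi> k @ [T']))"
    by (rule MT_extend[OF psi T' sub])
  have "\<psi>(k := \<psi> k @ [T']) \<in> cover_set P E k"
    unfolding cover_set_def supp_def using ext cov by simp
  thus "\<exists>\<phi>\<in>cover_set P E k. mt_le \<psi> \<phi>" using ext by blast
qed


lemma limit:
  assumes LTn: "\<forall>n. LT (T n)" and sub: "\<forall>n. subn (T (Suc n)) (T n) (Suc n)"
  shows "\<exists>r qL qq. wfq qL \<and> (\<Inter>n. T n) = trw r qL \<and>
     (\<forall>p. wfq (qq p) \<and> T p = trw r (qq p) \<and> (\<forall>m<p. qq p m = qL m))"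
proof -
  have "\<forall>n. \<exists>x. wfq (snd x) \<and> T n = trw (fst x) (snd x)" using LTn unfolding LT_iff by auto
  from choice[OF this] obtain X where X0: "\<forall>n. wfq (snd (X n)) \<and> T n = trw (fst (X n)) (snd (X n))"
    by blast
  hence X: "\<And>n. wfq (snd (X n)) \<and> T n = trw (fst (X n)) (snd (X n))" by blast
  define rr where "rr n = fst (X n)" for n
  define qq where "qq n = snd (X n)" for n
  have wq: "\<And>n. wfq (qq n)" and Tn: "\<And>n. T n = trw (rr n) (qq n)"
    using X unfolding rr_def qq_def by auto
  have stp: "\<And>n. rr (Suc n) = rr n \<and> (\<forall>m<n. qq (Suc n) m = qq n m)"
  proof -
    fix n
    have sb: "subn (trw (rr (Suc n)) (qq (Suc n))) (trw (rr n) (qq n)) (Suc n)"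
      using sub Tn by metis
    have "rr (Suc n) = rr n \<and> (\<forall>m. Suc m < Suc n \<longrightarrow> (\<forall>i. qq (Suc n) m i = qq n m i))"
      using subn_trw[OF wq wq sb] by simp
    thus "rr (Suc n) = rr n \<and> (\<forall>m<n. qq (Suc n) m = qq n m)" by auto
  qed
  have rr0: "\<And>n. rr n = rr 0" by (induct_tac n) (simp_all add: stp)
  have qqm: "\<And>m p. Suc m \<le> p \<Longrightarrow> qq p m = qq (Suc m) m"
  proof -
    fix m p :: nat assume "Suc m \<le> p"
    thus "qq p m = qq (Suc m) m"
    proof (induction p rule: dec_induct)
      case (step p) thus ?case using stp[of p] by simp
    qed simp
  qed
  define qL where "qL m = qq (Suc m) m" for m
  have wL: "wfq qL" unfolding wfq_def
  proof
    fix m show "length (qL m False) = length (qL m True) \<and> 1 \<le> length (qL m False) \<and>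
          qL m False ! 0 = False \<and> qL m True ! 0 = True"
      using wfq_D[OF wq[of "Suc m"], of m] by (simp add: qL_def)
  qed
  have agree: "\<And>p m. m < p \<Longrightarrow> qq p m = qL m"
  proof -
    fix p m :: nat assume "m < p"
    thus "qq p m = qL m" unfolding qL_def using qqm[of m p] by simp
  qed
  have dec: "\<And>p p'. p \<le> p' \<Longrightarrow> T p' \<subseteq> T p"
  proof -
    fix p p' :: nat assume "p \<le> p'"
    thus "T p' \<subseteq> T p"
    proof (induction p' rule: dec_induct)
      case (step p') thus ?case using sub unfolding subn_def by blast
    qed simp
  qed
  have "(\<Inter>n. T n) = trw (rr 0) qL"
  proof (intro equalityI subsetI)
    fix y assume y: "y \<in> (\<Inter>n. T n)"
    define n where "n = Suc (length y)"
    have "y \<in> T n" using y by blast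
    hence "y \<in> trw (rr 0) (qq n)" using Tn[of n] rr0[of n] by simp
    then obtain f N where p: "prefix y (rr 0 @ bw (qq n) f N)" unfolding trw_def by blast
    define N' where "N' = max N (length y)"
    have p': "prefix y (rr 0 @ bw (qq n) f N')"
      using p bw_mono[of N N' "qq n" f] unfolding N'_def
      by (meson max.cobounded1 prefix_order.trans same_prefix_prefix)
    have p2: "prefix (rr 0 @ bw (qq n) f (length y)) (rr 0 @ bw (qq n) f N')"
      using bw_mono[of "length y" N' "qq n" f] unfolding N'_def by simp
    have "length y \<le> length (rr 0 @ bw (qq n) f (length y))"
      using bw_length_ge[OF wq[of n], where f=f and N="length y"] by simp
    hence "prefix y (rr 0 @ bw (qq n) f (length y))"
      using prefix_length_prefix[OF p' p2] by simp
    moreover have "bw (qq n) f (length y) = bw qL f (length y)"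
      by (rule bw_cong) (simp add: agree n_def)
    ultimately show "y \<in> trw (rr 0) qL" unfolding trw_def by auto
  next
    fix y assume "y \<in> trw (rr 0) qL"
    then obtain f N where p: "prefix y (rr 0 @ bw qL f N)" unfolding trw_def by blast
    show "y \<in> (\<Inter>n. T n)"
    proof
      fix p :: nat
      define p' where "p' = max p (Suc N)"
      have "bw qL f N = bw (qq p') f N" by (rule bw_cong) (simp add: agree p'_def)
      hence "prefix y (rr p' @ bw (qq p') f N)" using p rr0[of p'] by simp
      hence "y \<in> trw (rr p') (qq p')" unfolding trw_def by blast
      hence "y \<in> T p'" using Tn[of p'] by simp
      thus "y \<in> T p" using dec[of p p'] unfolding p'_def by auto
    qed
  qed
  moreover have "\<forall>p. wfq (qq p) \<and> T p = trw (rr 0) (qq p) \<and> (\<forall>m<p. qq p m = qL m)"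
  proof
    fix p show "wfq (qq p) \<and> T p = trw (rr 0) (qq p) \<and> (\<forall>m<p. qq p m = qL m)"
      using wq[of p] Tn[of p] rr0[of p] agree[of _ p] by simp
  qed
  ultimately show ?thesis using wL by blast
qed

theorem lemma7p6:
  fixes P :: "tree set" and MD :: "tree set set" and MM :: "mtree set set"
    and \<Phi> :: "nat \<Rightarrow> mtree" and TP :: "nat \<Rightarrow> nat \<Rightarrow> tree"
    and D :: "tree set" and U :: tree
  assumes LTF: "LTF P"
    and P_in: "P \<in> MD"
    and shift_closed: "\<forall>E\<in>MD. \<forall>\<sigma>. shiftT \<sigma> ` E \<in> MD"
    and cover_closed: "\<forall>E\<in>MD. \<forall>k. cover_set P E k \<in> MM"
    and Phi_MT: "\<forall>j. \<Phi> j \<in> MT P"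
    and Phi_incr: "\<forall>j. mt_le (\<Phi> j) (\<Phi> (Suc j))"
    and Phi_generic: "\<forall>X\<in>MM. dense_MT P X \<longrightarrow> (\<exists>j. \<Phi> j \<in> X)"
    and TP_LC: "\<forall>k n. TP k n \<in> LC n P"
    and TP_sub: "\<forall>k n. subn (TP k (Suc n)) (TP k n) (Suc n)"
    and TP_Phi: "\<forall>j k n. n < length (\<Phi> j k) \<longrightarrow> \<Phi> j k ! n = TP k n"
    and D_in: "D \<in> MD"
    and D_sub: "D \<subseteq> P"
    and D_pre: "predense D P"
    and U_in: "U \<in> UU TP"
  shows "(\<exists>D'. finite D' \<and> D' \<subseteq> D \<and> U \<subseteq> \<Union>D') \<and> predense D (UU TP \<union> P)"
proof -
  have "TP 0 0 \<in> LC 0 P" using TP_LC by blast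
  hence "goto (TP 0 0) [] \<in> P" unfolding LC_def by blast
  hence Pne: "P \<noteq> {}" by auto
  have cov: "\<And>k \<sigma>. \<exists>p. \<forall>s. length s = p \<longrightarrow> (\<exists>D0\<in>D. goto (TP k p) s \<subseteq> shiftT \<sigma> D0)"
  proof -
    fix k \<sigma>
    let ?E = "shiftT \<sigma> ` D"
    have "?E \<in> MD" using shift_closed D_in by blast
    hence "cover_set P ?E k \<in> MM" using cover_closed by blast
    moreover have "dense_MT P (cover_set P ?E k)"
      by (rule cover_dense[OF LTF predense_shift[OF LTF D_pre] Pne])
    ultimately obtain j where j: "\<Phi> j \<in> cover_set P ?E k" using Phi_generic by blast
    hence ne: "\<Phi> j k \<noteq> []" and C: "\<forall>s. length s = length (\<Phi> j k) - 1 \<longrightarrow>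
        (\<exists>S\<in>?E. goto (last (\<Phi> j k)) s \<subseteq> S)"
      unfolding cover_set_def supp_def by auto
    define p where "p = length (\<Phi> j k) - 1"
    have "last (\<Phi> j k) = \<Phi> j k ! p" using ne p_def by (simp add: last_conv_nth)
    also have "\<dots> = TP k p" using TP_Phi ne p_def by simp
    finally have "\<forall>s. length s = p \<longrightarrow> (\<exists>S\<in>?E. goto (TP k p) s \<subseteq> S)" using C p_def by simp
    thus "\<exists>p. \<forall>s. length s = p \<longrightarrow> (\<exists>D0\<in>D. goto (TP k p) s \<subseteq> shiftT \<sigma> D0)" by blast
  qed
  have lim: "\<And>k. \<exists>r qL qq. wfq qL \<and> Uk TP k = trw r qL \<and>
     (\<forall>p. wfq (qq p) \<and> TP k p = trw r (qq p) \<and> (\<forall>m<p. qq p m = qL m))"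
  proof -
    fix k
    have a: "\<forall>n. LT (TP k n)" using TP_LC LC_LT by blast
    have b: "\<forall>n. subn (TP k (Suc n)) (TP k n) (Suc n)" using TP_sub by blast
    show "?thesis k" unfolding Uk_def by (rule limit[OF a b])
  qed
  have UkTP: "\<And>k p. Uk TP k \<subseteq> TP k p" unfolding Uk_def by blast
  from U_in obtain k s \<sigma> where U: "U = shiftT \<sigma> (goto (Uk TP k) s)" unfolding UU_def by blast
  have part1: "\<exists>D'. finite D' \<and> D' \<subseteq> D \<and> U \<subseteq> \<Union>D'"
  proof -
    obtain p where p: "\<forall>s. length s = p \<longrightarrow> (\<exists>D0\<in>D. goto (TP k p) s \<subseteq> shiftT \<sigma> D0)"
      using cov by blast
    then obtain F where F: "\<And>s. length s = p \<Longrightarrow> F s \<in> D \<and> goto (TP k p) s \<subseteq> shiftT \<sigma> (F s)"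
      by metis
    let ?D' = "F ` {s. length s = p}"
    have fin: "finite ?D'" using finite_lists_length_eq[of "UNIV :: bool set" p] by simp
    have sub: "?D' \<subseteq> D" using F by blast
    obtain r q where w: "wfq q" and Tr: "TP k p = trw r q"
      using TP_LC LC_LT unfolding LT_iff by blast
    have "goto (Uk TP k) s \<subseteq> TP k p" using goto_sub UkTP by blast
    also have "TP k p = (\<Union>s\<in>{s. length s = p}. goto (TP k p) s)"
      using trw_decomp[OF w] Tr by simp
    also have "\<dots> \<subseteq> (\<Union>s\<in>{s. length s = p}. shiftT \<sigma> (F s))" using F by blast
    finally have "U \<subseteq> shiftT \<sigma> (\<Union>s\<in>{s. length s = p}. shiftT \<sigma> (F s))"
      unfolding U by (rule shiftT_mono)
    also have "\<dots> = \<Union>?D'" by (simp add: shiftT_Union image_image)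
    finally show ?thesis using fin sub by blast
  qed
  have part2: "predense D (UU TP \<union> P)"
    unfolding predense_def
  proof
    fix T assume "T \<in> UU TP \<union> P"
    thus "\<exists>S\<in>D. \<exists>R\<in>UU TP \<union> P. R \<subseteq> T \<and> R \<subseteq> S"
    proof
      assume "T \<in> P"
      thus ?thesis using D_pre unfolding predense_def by blast
    next
      assume "T \<in> UU TP"
      then obtain k s \<sigma> where T: "T = shiftT \<sigma> (goto (Uk TP k) s)" unfolding UU_def by blast
      obtain p where p: "\<forall>s. length s = p \<longrightarrow> (\<exists>D0\<in>D. goto (TP k p) s \<subseteq> shiftT \<sigma> D0)"
        using cov by blast
      obtain r qL qq where wL: "wfq qL" and UL: "Uk TP k = trw r qL"
        and Q: "\<And>p. wfq (qq p) \<and> TP k p = trw r (qq p) \<and> (\<forall>m<p. qq p m = qL m)"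
        using lim by blast
      define s' where "s' = s @ replicate (p - length s) False"
      define t0 where "t0 = take p s'"
      have lt0: "length t0 = p" unfolding t0_def s'_def by simp
      have i1: "goto (Uk TP k) s' \<subseteq> goto (Uk TP k) s"
        unfolding s'_def goto_append using goto_sub by blast
      have i2: "goto (Uk TP k) s' \<subseteq> goto (Uk TP k) t0"
        using goto_append[of "Uk TP k" t0 "drop p s'"] goto_sub unfolding t0_def by simp
      have "bw qL (nth t0) (length t0) = bw (qq p) (nth t0) (length t0)"
        by (rule bw_cong) (simp add: Q lt0)
      hence i3: "goto (Uk TP k) t0 \<subseteq> goto (TP k p) t0"
        using goto_restr[OF wL, of r t0] goto_restr[of "qq p" r t0] Q[of p] UL
          restr_mono[OF UkTP[of k p]] by simp
      obtain D0 where D0: "D0 \<in> D" "goto (TP k p) t0 \<subseteq> shiftT \<sigma> D0" using p lt0 by blast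
      let ?R = "shiftT \<sigma> (goto (Uk TP k) s')"
      have "?R \<in> UU TP" unfolding UU_def by blast
      moreover have "?R \<subseteq> T" unfolding T by (rule shiftT_mono[OF i1])
      moreover have "?R \<subseteq> D0"
      proof -
        have "goto (Uk TP k) s' \<subseteq> shiftT \<sigma> D0" using i2 i3 D0 by blast
        from shiftT_mono[OF this, of \<sigma>] show ?thesis by simp
      qed
      ultimately show ?thesis using D0 by blast
    qed
  qed
  from part1 part2 show ?thesis by blast
qed

end
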